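(* Let $n\ge2$, $r>0$, $\varepsilon_r>0$, $\rho^*>0$, $\omega^*\in\mathbb R$, $k_\rho,k_z,k_\phi>0$. Consider the closed-loop system, for $i=1,\dots,n$, $$\dot\rho_i=\lambda(\rho_i,\sigma(t))\,k_\rho(\rho^*-\rho_i),\qquad \dot\phi_i=\omega^*+k_\phi(\bar\phi_i-\phi_i),\qquad \dot z_i=-k_zz_i,$$ where $\sigma(t)=r/|\sin(\delta_{\min}(t)/2)|$, $\delta_{\min}(t)=\min_k\delta_k(t)$, and $$\lambda(\rho,\sigma)=\begin{cases}0 & \rho<\sigma+2r,\\ 1 & \rho>\sigma+2r+\varepsilon_r,\\ (\rho-\sigma-2r)/\varepsilon_r & \text{otherwise.}\end{cases}$$ Assume $\delta_k(t_0)>0$ for all $k$. Then: (1) if $\rho_i(t_0)>\frac{r}{|\sin(\pi/n)|}+2r$ for all $i$ and $|\rho_i(t_0)-\rho_j(t_0)|\ge2r$ for all $i\neq j$, then $D_{ij}(t)>2r$ for all $i\ne j$ and all $t\ge t_0$ (no collisions); (2) for every initial condition, $\phi_i-\bar\phi_i\to0$, $\dot\phi_i\to\omega^*$ and $z_i\to0$ exponentially for all $i$; moreover, if in addition $\rho^*>\frac{r}{|\sin(\pi/n)|}+2r$ and $\rho_i(t_0)>\frac{r}{|\sin(\pi/n)|}+2r$ and $|\rho_i(t_0)-\rho_j(t_0)|\ge 2r$ for all $j\ne i$, then $\rho_i\to\rho^*$ exponentially.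
   Context: Robots have cylindrical coordinates $(\rho_i,\phi_i,z_i)$ (radius, phase, height) relative to a target frame, with dynamics after feedback transformation $\dot\rho_i,\dot\phi_i,\dot z_i$ equal to free inputs. Phases are real-valued (not reduced modulo $2\pi$), robots indexed counterclockwise at $t_0$. Phase averages: $\bar\phi_1=\frac{\phi_2+\phi_n-2\pi}{2}$, $\bar\phi_i=\frac{\phi_{i+1}+\phi_{i-1}}{2}$ for $2\le i\le n-1$, $\bar\phi_n=\frac{\phi_1+2\pi+\phi_{n-1}}{2}$. Consecutive phase differences: $\delta_1=\phi_1-\phi_n+2\pi$, $\delta_k=\phi_k-\phi_{k-1}$ for $2\le k\le n$. Distance $D_{ij}=\sqrt{\rho_i^2+\rho_j^2-2\rho_i\rho_j\cos(\phi_j-\phi_i)+(z_j-z_i)^2}$; a collision means $D_{ij}\le 2r$, with $r$ the safety radius. *)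

theory Defs
  imports Complex_Main
begin

text \<open>Robots are indexed by 1..n. Trajectories are functions nat => real => real.\<close>

definition phibar :: "nat \<Rightarrow> (nat \<Rightarrow> real \<Rightarrow> real) \<Rightarrow> nat \<Rightarrow> real \<Rightarrow> real" where
  "phibar n phi i t =
     (if i = 1 then (phi 2 t + phi n t - 2*pi) / 2
      else if i = n then (phi 1 t + 2*pi + phi (n-1) t) / 2
      else (phi (i+1) t + phi (i-1) t) / 2)"

definition delta :: "nat \<Rightarrow> (nat \<Rightarrow> real \<Rightarrow> real) \<Rightarrow> nat \<Rightarrow> real \<Rightarrow> real" where
  "delta n phi k t = (if k = 1 then phi 1 t - phi n t + 2*pi else phi k t - phi (k-1) t)"

definition delta_min :: "nat \<Rightarrow> (nat \<Rightarrow> real \<Rightarrow> real) \<Rightarrow> real \<Rightarrow> real" where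
  "delta_min n phi t = Min ((\<lambda>k. delta n phi k t) ` {1..n})"

definition sigma :: "real \<Rightarrow> nat \<Rightarrow> (nat \<Rightarrow> real \<Rightarrow> real) \<Rightarrow> real \<Rightarrow> real" where
  "sigma r n phi t = r / \<bar>sin (delta_min n phi t / 2)\<bar>"

definition lam :: "real \<Rightarrow> real \<Rightarrow> real \<Rightarrow> real \<Rightarrow> real" where
  "lam r eps rho s =
     (if rho < s + 2*r then 0
      else if rho > s + 2*r + eps then 1
      else (rho - s - 2*r) / eps)"

definition dist_ij :: "(nat \<Rightarrow> real \<Rightarrow> real) \<Rightarrow> (nat \<Rightarrow> real \<Rightarrow> real) \<Rightarrow> (nat \<Rightarrow> real \<Rightarrow> real)
    \<Rightarrow> nat \<Rightarrow> nat \<Rightarrow> real \<Rightarrow> real" where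
  "dist_ij rho phi z i j t =
     sqrt ((rho i t)\<^sup>2 + (rho j t)\<^sup>2 - 2 * rho i t * rho j t * cos (phi j t - phi i t)
           + (z j t - z i t)\<^sup>2)"

definition exp_conv :: "real \<Rightarrow> (real \<Rightarrow> real) \<Rightarrow> real \<Rightarrow> bool" where
  "exp_conv t0 f L \<longleftrightarrow>
     (\<exists>C \<alpha>. \<alpha> > 0 \<and> (\<forall>t\<ge>t0. \<bar>f t - L\<bar> \<le> C * exp (- \<alpha> * (t - t0))))"

end

theory Submission
  imports Defs "HOL-Analysis.Elementary_Metric_Spaces" "HOL-Analysis.Convex" "HOL-Real_Asymp.Real_Asymp"
begin


lemma deriv_at_of_within:
  fixes f :: "real \<Rightarrow> real"
  assumes "(f has_real_derivative D) (at x within {a..})" "a < x"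
  shows "(f has_real_derivative D) (at x)"
proof -
  have "(f has_real_derivative D) (at x within {a<..})"
    using assms(1) by (rule has_field_derivative_subset) auto
  moreover have "at x within {a<..} = at x" by (rule at_within_open) (use assms(2) in auto)
  ultimately show ?thesis by metis
qed

lemma cont_of_deriv_within:
  fixes f f' :: "real \<Rightarrow> real"
  assumes "\<And>t. t \<ge> a \<Longrightarrow> (f has_real_derivative f' t) (at t within {a..})"
  shows "continuous_on {a..} f"
  using assms by (metis DERIV_continuous atLeast_iff continuous_on_eq_continuous_within)

lemma decr_within:
  fixes f f' :: "real \<Rightarrow> real"
  assumes d: "\<And>t. t \<ge> a \<Longrightarrow> (f has_real_derivative f' t) (at t within {a..})"
    and n: "\<And>t. t \<ge> a \<Longrightarrow> f' t \<le> 0" and "a \<le> s" "s \<le> t"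
  shows "f t \<le> f s"
proof (rule DERIV_nonpos_imp_decreasing_open[OF \<open>s \<le> t\<close>])
  fix x assume "s < x" "x < t"
  then show "\<exists>y. DERIV f x :> y \<and> y \<le> 0"
    using d[of x] n[of x] deriv_at_of_within[of f "f' x" x a] \<open>a \<le> s\<close> by auto
next
  show "continuous_on {s..t} f"
  proof -
    have "continuous_on {a..} f" using d by (rule cont_of_deriv_within)
    then show ?thesis by (rule continuous_on_subset) (use \<open>a \<le> s\<close> in auto)
  qed
qed

lemma decr_on:
  fixes f f' :: "real \<Rightarrow> real"
  assumes d: "\<And>x. s \<le> x \<Longrightarrow> x \<le> t \<Longrightarrow> (f has_real_derivative f' x) (at x within {a..})"
    and n: "\<And>x. s \<le> x \<Longrightarrow> x \<le> t \<Longrightarrow> f' x \<le> 0" and "a \<le> s" "s \<le> t"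
  shows "f t \<le> f s"
proof (rule DERIV_nonpos_imp_decreasing_open[OF \<open>s \<le> t\<close>])
  fix x assume "s < x" "x < t"
  then show "\<exists>y. DERIV f x :> y \<and> y \<le> 0"
    using d[of x] n[of x] deriv_at_of_within[of f "f' x" x a] \<open>a \<le> s\<close> by auto
next
  show "continuous_on {s..t} f"
    unfolding continuous_on_eq_continuous_within
  proof
    fix x assume x: "x \<in> {s..t}"
    have "continuous (at x within {a..}) f" using d[of x] x by (auto intro: DERIV_continuous)
    then show "continuous (at x within {s..t}) f"
      by (rule continuous_within_subset) (use \<open>a \<le> s\<close> in auto)
  qed
qed

lemma barrier_first_zero:
  fixes f :: "real \<Rightarrow> real"
  assumes c: "continuous_on {a..b} f" and fa: "f a > 0"
    and H: "\<And>\<tau>. a < \<tau> \<Longrightarrow> \<tau> \<le> b \<Longrightarrow> (\<forall>u. a \<le> u \<and> u < \<tau> \<longrightarrow> f u > 0) \<Longrightarrow> f \<tau> = 0 \<Longrightarrow> False"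
  shows "\<forall>t. a \<le> t \<and> t \<le> b \<longrightarrow> f t > 0"
proof (rule ccontr)
  assume "\<not> ?thesis"
  then obtain t where t: "a \<le> t" "t \<le> b" "f t \<le> 0" by auto
  define S where "S = {u \<in> {a..b}. f u \<le> 0}"
  have cl: "closed S" unfolding S_def
    using continuous_on_closed_Collect_le[OF c continuous_on_const, of 0] by auto
  have ne: "S \<noteq> {}" using t S_def by auto
  have bb: "bdd_below S" unfolding S_def by (rule bdd_belowI[of _ a]) auto
  define \<tau> where "\<tau> = Inf S"
  have tS: "\<tau> \<in> S" using closed_contains_Inf[OF ne bb cl] \<tau>_def by simp
  have below: "\<forall>u. a \<le> u \<and> u < \<tau> \<longrightarrow> f u > 0"
  proof (intro allI impI)
    fix u assume u: "a \<le> u \<and> u < \<tau>"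
    have "u \<le> b" using u tS S_def by auto
    show "f u > 0"
    proof (rule ccontr)
      assume "\<not> f u > 0"
      then have "u \<in> S" using u \<open>u \<le> b\<close> S_def by auto
      then have "\<tau> \<le> u" unfolding \<tau>_def using bb by (rule cInf_lower)
      then show False using u by simp
    qed
  qed
  have ta: "a < \<tau>" using tS S_def fa by (cases "\<tau> = a") auto
  have "f \<tau> = 0"
  proof (rule ccontr)
    assume ne0: "f \<tau> \<noteq> 0"
    then have lt: "f \<tau> < 0" using tS S_def by auto
    have "\<exists>x\<ge>a. x \<le> \<tau> \<and> f x = 0"
      by (rule IVT2') (use fa lt ta in auto, rule continuous_on_subset[OF c], use tS S_def in auto)
    then obtain x where "a \<le> x" "x \<le> \<tau>" "f x = 0" by auto
    then show False using below ne0 fa by (cases "x = \<tau>") auto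
  qed
  then show False using H[OF ta _ below] tS S_def by auto
qed

lemma last_zero:
  fixes f :: "real \<Rightarrow> real"
  assumes c: "continuous_on {a..b} f" and fb: "f b < 0" and ab: "a \<le> b"
    and nall: "\<not> (\<forall>u. a \<le> u \<and> u \<le> b \<longrightarrow> f u < 0)"
  shows "\<exists>\<tau>. a \<le> \<tau> \<and> \<tau> < b \<and> f \<tau> = 0 \<and> (\<forall>u. \<tau> < u \<and> u \<le> b \<longrightarrow> f u < 0)"
proof -
  define S where "S = {u \<in> {a..b}. 0 \<le> f u}"
  have cl: "closed S" unfolding S_def
    using continuous_on_closed_Collect_le[OF continuous_on_const c, of 0] by auto
  have ne: "S \<noteq> {}" using nall S_def by auto
  have bb: "bdd_above S" unfolding S_def by (rule bdd_aboveI[of _ b]) auto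
  define \<tau> where "\<tau> = Sup S"
  have tS: "\<tau> \<in> S" using closed_contains_Sup[OF ne bb cl] \<tau>_def by simp
  have tb: "\<tau> < b" using tS S_def fb by (cases "\<tau> = b") auto
  have above: "\<forall>u. \<tau> < u \<and> u \<le> b \<longrightarrow> f u < 0"
  proof (intro allI impI)
    fix u assume u: "\<tau> < u \<and> u \<le> b"
    show "f u < 0"
    proof (rule ccontr)
      assume "\<not> f u < 0"
      then have "u \<in> S" using u tS S_def by auto
      then have "u \<le> \<tau>" unfolding \<tau>_def using bb by (rule cSup_upper)
      then show False using u by simp
    qed
  qed
  have "f \<tau> = 0"
  proof (rule ccontr)
    assume ne0: "f \<tau> \<noteq> 0"
    then have gt: "f \<tau> > 0" using tS S_def by auto
    have "\<exists>x\<ge>\<tau>. x \<le> b \<and> f x = 0"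
      by (rule IVT2') (use fb gt tb in auto, rule continuous_on_subset[OF c], use tS S_def in auto)
    then obtain x where "\<tau> \<le> x" "x \<le> b" "f x = 0" by auto
    then show False using above ne0 by (metis order.not_eq_order_implies_strict less_irrefl)
  qed
  then show ?thesis using tS S_def tb above by auto
qed

lemma cont_Min:
  fixes f :: "'a \<Rightarrow> real \<Rightarrow> real"
  assumes "finite K" "K \<noteq> {}" "\<And>k. k \<in> K \<Longrightarrow> continuous_on S (f k)"
  shows "continuous_on S (\<lambda>t. Min ((\<lambda>k. f k t) ` K))"
  using assms
proof (induction K rule: finite_ne_induct)
  case (singleton x) then show ?case by simp
next
  case (insert x F)
  have "continuous_on S (\<lambda>t. min (f x t) (Min ((\<lambda>k. f k t) ` F)))"
    using insert by (intro continuous_on_min) auto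
  then show ?case using insert by simp
qed




definition nxt :: "nat \<Rightarrow> nat \<Rightarrow> nat" where "nxt n i = (if i = n then 1 else i + 1)"
definition prv :: "nat \<Rightarrow> nat \<Rightarrow> nat" where "prv n i = (if i = 1 then n else i - 1)"

locale sys =
  fixes n :: nat and r eps rs ws kr kz kp t0 :: real
    and rho phi z dphi :: "nat \<Rightarrow> real \<Rightarrow> real"
  assumes n2: "n \<ge> 2" and r: "r > 0" and eps: "eps > 0" and rs: "rs > 0"
    and kr: "kr > 0" and kz: "kz > 0" and kp: "kp > 0"
    and ode_rho: "\<And>i t. i\<in>{1..n} \<Longrightarrow> t\<ge>t0 \<Longrightarrow> ((rho i) has_real_derivative
          (lam r eps (rho i t) (sigma r n phi t) * kr * (rs - rho i t))) (at t within {t0..})"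
    and ode_phi: "\<And>i t. i\<in>{1..n} \<Longrightarrow> t\<ge>t0 \<Longrightarrow> ((phi i) has_real_derivative dphi i t) (at t within {t0..})"
    and ode_dphi: "\<And>i t. i\<in>{1..n} \<Longrightarrow> t\<ge>t0 \<Longrightarrow> dphi i t = ws + kp * (phibar n phi i t - phi i t)"
    and ode_z: "\<And>i t. i\<in>{1..n} \<Longrightarrow> t\<ge>t0 \<Longrightarrow> ((z i) has_real_derivative (- kz * z i t)) (at t within {t0..})"
    and delta0: "\<And>k. k\<in>{1..n} \<Longrightarrow> delta n phi k t0 > 0"
begin

abbreviation "dl k t \<equiv> delta n phi k t"

lemma nxt_in: "i \<in> {1..n} \<Longrightarrow> nxt n i \<in> {1..n}" using n2 by (auto simp: nxt_def)
lemma prv_in: "i \<in> {1..n} \<Longrightarrow> prv n i \<in> {1..n}" using n2 by (auto simp: prv_def)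
lemma nxt_prv: "i \<in> {1..n} \<Longrightarrow> nxt n (prv n i) = i" using n2 by (auto simp: nxt_def prv_def)
lemma prv_nxt: "i \<in> {1..n} \<Longrightarrow> prv n (nxt n i) = i" using n2 by (auto simp: nxt_def prv_def)

lemma bij_nxt: "bij_betw (nxt n) {1..n} {1..n}"
  by (rule bij_betw_byWitness[of _ "prv n"]) (use nxt_in prv_in nxt_prv prv_nxt in auto)

lemma sum_nxt: "(\<Sum>k\<in>{1..n}. g (nxt n k)) = (\<Sum>k\<in>{1..n}. (g k :: real))"
  using sum.reindex_bij_betw[OF bij_nxt, of g] by simp

lemma pb: "i \<in> {1..n} \<Longrightarrow> phibar n phi i t - phi i t = (dl (nxt n i) t - dl i t) / 2"
  using n2 by (cases "i = 1"; cases "i = n") (auto simp: phibar_def delta_def nxt_def field_simps numeral_2_eq_2)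

lemma angle_sum: "1 \<le> i \<Longrightarrow> i \<le> j \<Longrightarrow> j \<le> n \<Longrightarrow> phi j t - phi i t = (\<Sum>k\<in>{Suc i..j}. dl k t)"
proof (induction j)
  case 0 then show ?case by simp
next
  case (Suc j)
  show ?case
  proof (cases "i = Suc j")
    case True then show ?thesis by simp
  next
    case False
    then have "i \<le> j" using Suc by simp
    then have "(\<Sum>k\<in>{Suc i..Suc j}. dl k t) = (\<Sum>k\<in>{Suc i..j}. dl k t) + dl (Suc j) t"
      by (simp add: sum.cl_ivl_Suc)
    then show ?thesis using Suc \<open>i \<le> j\<close> by (simp add: delta_def)
  qed
qed

lemma sum_delta: "(\<Sum>k\<in>{1..n}. dl k t) = 2 * pi"
proof -
  have "(\<Sum>k\<in>{1..n}. dl k t) = dl 1 t + (\<Sum>k\<in>{Suc 1..n}. dl k t)"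
    by (rule sum.atLeast_Suc_atMost) (use n2 in simp)
  also have "\<dots> = dl 1 t + (phi n t - phi 1 t)" using angle_sum[of 1 n t] n2 by simp
  moreover have "dl 1 t = phi 1 t - phi n t + 2*pi" by (simp add: delta_def)
  ultimately show ?thesis by linarith
qed

lemma dphi_eq: "i \<in> {1..n} \<Longrightarrow> t \<ge> t0 \<Longrightarrow> dphi i t = ws + kp / 2 * (dl (nxt n i) t - dl i t)"
  using ode_dphi pb by simp

lemma deriv_delta: assumes k: "k \<in> {1..n}" and t: "t \<ge> t0"
  shows "((\<lambda>t. dl k t) has_real_derivative kp/2 * (dl (nxt n k) t - 2 * dl k t + dl (prv n k) t)) (at t within {t0..})"
proof -
  have pk: "prv n k \<in> {1..n}" using prv_in k .
  have val: "dphi k t - dphi (prv n k) t = kp/2 * (dl (nxt n k) t - 2 * dl k t + dl (prv n k) t)"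
    using dphi_eq[OF k t] dphi_eq[OF pk t] nxt_prv[OF k] by (simp add: algebra_simps)
  have "((\<lambda>t. dl k t) has_real_derivative dphi k t - dphi (prv n k) t) (at t within {t0..})"
  proof (cases "k = 1")
    case True
    then have e: "(\<lambda>t. dl k t) = (\<lambda>t. phi 1 t - phi n t + 2*pi)" by (simp add: delta_def fun_eq_iff)
    show ?thesis unfolding e using True ode_phi[OF k t] ode_phi[OF pk t]
      by (auto intro!: derivative_eq_intros simp: prv_def)
  next
    case False
    then have e: "(\<lambda>t. dl k t) = (\<lambda>t. phi k t - phi (k-1) t)" by (simp add: delta_def fun_eq_iff)
    show ?thesis unfolding e using False ode_phi[OF k t] ode_phi[OF pk t]
      by (auto intro!: derivative_eq_intros simp: prv_def)
  qed
  then show ?thesis using val by simp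
qed

end


context sys begin

lemma poincare:
  fixes e :: "nat \<Rightarrow> real"
  assumes s0: "(\<Sum>k\<in>{1..n}. e k) = 0"
  shows "(\<Sum>k\<in>{1..n}. (e k)\<^sup>2) \<le> real n * real n * (\<Sum>k\<in>{1..n}. (e (nxt n k) - e k)\<^sup>2)"
proof -
  define d where "d k = e (nxt n k) - e k" for k
  define P where "P = (\<Sum>k\<in>{1..n}. \<bar>d k\<bar>)"
  have a: "e i - e 1 = (\<Sum>k\<in>{1..<i}. d k)" if i: "i \<in> {1..n}" for i
  proof -
    have "(\<Sum>k\<in>{1..<i}. d k) = (\<Sum>k\<in>{1..<i}. e (Suc k) - e k)"
      by (rule sum.cong) (use i in \<open>auto simp: d_def nxt_def\<close>)
    also have "\<dots> = e i - e 1" using i by (intro sum_Suc_diff') auto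
    finally show ?thesis by simp
  qed
  have b: "(e i - e 1)\<^sup>2 \<le> P\<^sup>2" if i: "i \<in> {1..n}" for i
  proof -
    have "\<bar>e i - e 1\<bar> \<le> (\<Sum>k\<in>{1..<i}. \<bar>d k\<bar>)" using a[OF i] sum_abs by metis
    also have "\<dots> \<le> P" unfolding P_def by (rule sum_mono2) (use i in auto)
    finally have "\<bar>e i - e 1\<bar> \<le> P" .
    then show ?thesis using power_mono[of "\<bar>e i - e 1\<bar>" P 2] by simp
  qed
  have c: "(\<Sum>i\<in>{1..n}. (e i - e 1)\<^sup>2) = (\<Sum>k\<in>{1..n}. (e k)\<^sup>2) - 2 * e 1 * (\<Sum>k\<in>{1..n}. e k) + real n * (e 1)\<^sup>2"
    by (simp add: power2_diff sum.distrib sum_subtractf sum_distrib_left mult_ac)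
  have dd: "(\<Sum>i\<in>{1..n}. (e i - e 1)\<^sup>2) \<le> real n * P\<^sup>2"
    using sum_bounded_above[of "{1..n}" "\<lambda>i. (e i - e 1)\<^sup>2" "P\<^sup>2"] b by simp
  have ee: "P\<^sup>2 \<le> (\<Sum>k\<in>{1..n}. (d k)\<^sup>2) * real n"
    using sum_squared_le_sum_of_squares[of "\<lambda>k. \<bar>d k\<bar>" "{1..n}"] unfolding P_def by simp
  have "0 \<le> real n * (e 1)\<^sup>2" by simp
  moreover have "(\<Sum>i\<in>{1..n}. (e i - e 1)\<^sup>2) = (\<Sum>k\<in>{1..n}. (e k)\<^sup>2) + real n * (e 1)\<^sup>2" using c s0 by simp
  ultimately have "(\<Sum>k\<in>{1..n}. (e k)\<^sup>2) \<le> (\<Sum>i\<in>{1..n}. (e i - e 1)\<^sup>2)" by linarith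
  then have "(\<Sum>k\<in>{1..n}. (e k)\<^sup>2) \<le> real n * P\<^sup>2" using dd by linarith
  also have "\<dots> \<le> real n * ((\<Sum>k\<in>{1..n}. (d k)\<^sup>2) * real n)" using ee by (simp add: mult_left_mono)
  finally show ?thesis by (simp add: d_def algebra_simps)
qed

abbreviation "ee k t \<equiv> dl k t - 2 * pi / real n"
definition "V t = (\<Sum>k\<in>{1..n}. (ee k t)\<^sup>2)"

lemma sum_ee: "(\<Sum>k\<in>{1..n}. ee k t) = 0"
  using n2 sum_delta[of t] by (simp add: sum_subtractf)

lemma V_deriv: assumes t: "t \<ge> t0"
  shows "(V has_real_derivative - kp * (\<Sum>k\<in>{1..n}. (ee (nxt n k) t - ee k t)\<^sup>2)) (at t within {t0..})"
proof -
  have "(V has_real_derivative (\<Sum>k\<in>{1..n}. 2 * ee k t * (kp/2 * (dl (nxt n k) t - 2 * dl k t + dl (prv n k) t)))) (at t within {t0..})"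
    unfolding V_def[abs_def]
    by (rule DERIV_sum) (auto intro!: derivative_eq_intros deriv_delta[OF _ t])
  moreover have "(\<Sum>k\<in>{1..n}. 2 * ee k t * (kp/2 * (dl (nxt n k) t - 2 * dl k t + dl (prv n k) t)))
      = - kp * (\<Sum>k\<in>{1..n}. (ee (nxt n k) t - ee k t)\<^sup>2)"
  proof -
    define e where "e k = ee k t" for k
    define A where "A = (\<Sum>k\<in>{1..n}. e k * e (nxt n k))"
    define B where "B = (\<Sum>k\<in>{1..n}. e k * e (prv n k))"
    define Q where "Q = (\<Sum>k\<in>{1..n}. (e k)\<^sup>2)"
    define DD where "DD = (\<Sum>k\<in>{1..n}. (e (nxt n k) - e k)\<^sup>2)"
    have 1: "(\<Sum>k\<in>{1..n}. 2 * ee k t * (kp/2 * (dl (nxt n k) t - 2 * dl k t + dl (prv n k) t)))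
       = kp * A - 2 * kp * Q + kp * B"
    proof -
      have "(\<Sum>k\<in>{1..n}. 2 * ee k t * (kp/2 * (dl (nxt n k) t - 2 * dl k t + dl (prv n k) t)))
         = (\<Sum>k\<in>{1..n}. kp * (e k * e (nxt n k)) - 2 * kp * (e k)\<^sup>2 + kp * (e k * e (prv n k)))"
        by (rule sum.cong) (auto simp: e_def algebra_simps power2_eq_square)
      also have "\<dots> = kp * A - 2 * kp * Q + kp * B"
        unfolding A_def B_def Q_def by (simp add: sum.distrib sum_subtractf sum_distrib_left)
      finally show ?thesis .
    qed
    have 2: "B = A"
    proof -
      have "(\<Sum>k\<in>{1..n}. e k * e (prv n k)) = (\<Sum>k\<in>{1..n}. e (nxt n k) * e (prv n (nxt n k)))"
        using sum_nxt[of "\<lambda>k. e k * e (prv n k)"] by simp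
      also have "\<dots> = (\<Sum>k\<in>{1..n}. e k * e (nxt n k))"
        by (rule sum.cong) (auto simp: prv_nxt)
      finally show ?thesis unfolding A_def B_def .
    qed
    have 3: "DD = 2 * Q - 2 * A"
      unfolding DD_def Q_def A_def using sum_nxt[of "\<lambda>k. (e k)\<^sup>2"]
      by (simp add: power2_diff sum.distrib sum_subtractf sum_distrib_left algebra_simps)
    have 4: "- kp * (\<Sum>k\<in>{1..n}. (ee (nxt n k) t - ee k t)\<^sup>2) = - kp * DD"
      by (simp add: e_def DD_def)
    show ?thesis unfolding 1 4 3 2 by (simp add: algebra_simps)
  qed
  ultimately show ?thesis by simp
qed

definition "alpha = kp / (real n * real n)"

lemma alpha_pos: "alpha > 0" using kp n2 by (simp add: alpha_def)

lemma V_decay: assumes t: "t \<ge> t0" shows "V t \<le> V t0 * exp (- alpha * (t - t0))"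
proof -
  define W where "W t = V t * exp (alpha * (t - t0))" for t
  define G where "G x = exp (alpha * (x - t0)) * (- kp * (\<Sum>k\<in>{1..n}. (ee (nxt n k) x - ee k x)\<^sup>2) + alpha * V x)" for x
  have d: "(W has_real_derivative G x) (at x within {t0..})" if x: "t0 \<le> x" "x \<le> t" for x
    unfolding W_def[abs_def] G_def using V_deriv[of x] x
    by (auto intro!: derivative_eq_intros simp: algebra_simps)
  have nn: "G x \<le> 0" if x: "t0 \<le> x" "x \<le> t" for x
  proof -
    have "V x \<le> real n * real n * (\<Sum>k\<in>{1..n}. (ee (nxt n k) x - ee k x)\<^sup>2)"
      unfolding V_def by (rule poincare[of "\<lambda>k. ee k x"]) (rule sum_ee)
    then have "alpha * V x \<le> kp * (\<Sum>k\<in>{1..n}. (ee (nxt n k) x - ee k x)\<^sup>2)"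
      using n2 kp unfolding alpha_def by (simp add: field_simps)
    then show ?thesis unfolding G_def by (simp add: mult_nonneg_nonpos)
  qed
  have "W t \<le> W t0" by (rule decr_on[OF d nn]) (use t in auto)
  then have "V t * exp (alpha * (t - t0)) \<le> V t0" by (simp add: W_def)
  then have "V t * exp (alpha * (t - t0)) * exp (- alpha * (t - t0)) \<le> V t0 * exp (- alpha * (t - t0))"
    by (simp add: mult_right_mono)
  then show ?thesis by (simp add: mult.assoc flip: exp_add)
qed

lemma V_nonneg: "V t \<ge> 0" unfolding V_def by (simp add: sum_nonneg)

lemma ee_bound: assumes k: "k \<in> {1..n}" and t: "t \<ge> t0"
  shows "\<bar>ee k t\<bar> \<le> sqrt (V t0) * exp (- (alpha/2) * (t - t0))"
proof -
  have "(ee k t)\<^sup>2 \<le> V t" unfolding V_def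
    by (rule member_le_sum[of k "{1..n}" "\<lambda>k. (ee k t)\<^sup>2"]) (use k in auto)
  also have "\<dots> \<le> V t0 * exp (- alpha * (t - t0))" using V_decay[OF t] .
  also have "\<dots> = (sqrt (V t0) * exp (- (alpha/2) * (t - t0)))\<^sup>2"
  proof -
    have "exp (- alpha * (t - t0)) = (exp (- (alpha/2) * (t - t0)))\<^sup>2"
      by (simp add: power2_eq_square flip: exp_add)
    then show ?thesis using V_nonneg[of t0] by (simp add: power_mult_distrib)
  qed
  finally have "\<bar>ee k t\<bar>\<^sup>2 \<le> (sqrt (V t0) * exp (- (alpha/2) * (t - t0)))\<^sup>2" by simp
  then show ?thesis by (rule power2_le_imp_le) (simp add: V_nonneg)
qed

end


context sys begin

abbreviation "dm t \<equiv> delta_min n phi t"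

lemma fin_ne: "finite {1..n}" "{1..n} \<noteq> {}" using n2 by auto

lemma dm_le: "k \<in> {1..n} \<Longrightarrow> dm t \<le> dl k t"
  unfolding delta_min_def by (rule Min_le) auto

lemma dm_in: "\<exists>k\<in>{1..n}. dm t = dl k t"
proof -
  have "dm t \<in> (\<lambda>k. dl k t) ` {1..n}" unfolding delta_min_def
    by (rule Min_in) (use n2 in auto)
  then show ?thesis by auto
qed

lemma cont_dl: "k \<in> {1..n} \<Longrightarrow> continuous_on {t0..} (\<lambda>t. dl k t)"
  by (rule cont_of_deriv_within[where f' = "\<lambda>t. kp/2 * (dl (nxt n k) t - 2 * dl k t + dl (prv n k) t)"])
     (rule deriv_delta, auto)

lemma cont_dm: "continuous_on {t0..} dm"
  unfolding delta_min_def by (rule cont_Min) (use n2 cont_dl in auto)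

lemma dm_upper: "dm t \<le> 2 * pi / real n"
proof -
  have "real (card {1..n}) * dm t \<le> (\<Sum>k\<in>{1..n}. dl k t)"
    by (rule sum_bounded_below) (rule dm_le)
  then have "real n * dm t \<le> 2 * pi" using sum_delta[of t] by simp
  then show ?thesis using n2 by (simp add: field_simps)
qed

lemma dm_mono: assumes s: "t0 \<le> s" and st: "s \<le> t" shows "dm s \<le> dm t"
proof -
  have key: "dm s \<le> dl k t" if k: "k \<in> {1..n}" for k
  proof (rule ccontr)
    assume "\<not> dm s \<le> dl k t"
    then have lt: "dl k t < dm s" by simp
    define \<epsilon> where "\<epsilon> = (dm s - dl k t) / (1 + (t - s))"
    have ep: "\<epsilon> > 0" unfolding \<epsilon>_def using lt st by simp
    define W where "W u = dm u - dm s + \<epsilon> * (1 + (u - s))" for u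
    have cW: "continuous_on {s..t} W" unfolding W_def
      by (intro continuous_intros continuous_on_subset[OF cont_dm]) (use s in auto)
    have "\<forall>u. s \<le> u \<and> u \<le> t \<longrightarrow> W u > 0"
    proof (rule barrier_first_zero[OF cW])
      show "W s > 0" using ep by (simp add: W_def)
    next
      fix \<tau> assume t1: "s < \<tau>" and t2: "\<tau> \<le> t" and pos: "\<forall>u. s \<le> u \<and> u < \<tau> \<longrightarrow> W u > 0"
        and z: "W \<tau> = 0"
      obtain j where j: "j \<in> {1..n}" and jm: "dm \<tau> = dl j \<tau>" using dm_in by blast
      define D where "D = kp/2 * (dl (nxt n j) \<tau> - 2 * dl j \<tau> + dl (prv n j) \<tau>)"
      have D0: "D \<ge> 0" unfolding D_def using dm_le[OF nxt_in[OF j], of \<tau>] dm_le[OF prv_in[OF j], of \<tau>] jm kp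
        by (intro mult_nonneg_nonneg) auto
      have der: "((\<lambda>u. dl j u - dm s + \<epsilon> * (1 + (u - s))) has_real_derivative D + \<epsilon>) (at \<tau> within {t0..})"
        using deriv_delta[OF j, of \<tau>] t1 s unfolding D_def
        by (auto intro!: derivative_eq_intros)
      then have der': "((\<lambda>u. dl j u - dm s + \<epsilon> * (1 + (u - s))) has_real_derivative D + \<epsilon>) (at \<tau>)"
        by (rule deriv_at_of_within) (use t1 s in auto)
      obtain d where d: "d > 0" and dd: "\<forall>h>0. h < d \<longrightarrow> dl j (\<tau> - h) - dm s + \<epsilon> * (1 + (\<tau> - h - s)) < dl j \<tau> - dm s + \<epsilon> * (1 + (\<tau> - s))"
        using DERIV_pos_inc_left[OF der'] D0 ep by force
      define h where "h = min d (\<tau> - s) / 2"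
      have h: "h > 0" "h < d" "h \<le> \<tau> - s" using d t1 unfolding h_def by auto
      have "W (\<tau> - h) > 0" using pos h by auto
      moreover have "dm (\<tau> - h) \<le> dl j (\<tau> - h)" by (rule dm_le[OF j])
      moreover have "dl j \<tau> - dm s + \<epsilon> * (1 + (\<tau> - s)) = 0" using z jm by (simp add: W_def)
      ultimately show False using dd h unfolding W_def by force
    qed
    then have "W t > 0" using st by auto
    moreover have "dm t \<le> dl k t" by (rule dm_le[OF k])
    moreover have "\<epsilon> * (1 + (t - s)) = dm s - dl k t" unfolding \<epsilon>_def using st by simp
    ultimately show False unfolding W_def by linarith
  qed
  obtain k where "k \<in> {1..n}" "dm t = dl k t" using dm_in by blast
  then show ?thesis using key by simp
qed

lemma dm_pos: "t \<ge> t0 \<Longrightarrow> dm t > 0"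
proof -
  assume t: "t \<ge> t0"
  obtain k where "k \<in> {1..n}" "dm t0 = dl k t0" using dm_in by blast
  then have "dm t0 > 0" using delta0 by simp
  then show ?thesis using dm_mono[of t0 t] t by simp
qed

lemma dm_half_le: "dm t / 2 \<le> pi / 2"
proof -
  have "2 * pi / real n \<le> pi" using n2 by (simp add: field_simps)
  then show ?thesis using dm_upper[of t] by simp
qed

lemma sin_dm_pos: "t \<ge> t0 \<Longrightarrow> sin (dm t / 2) > 0"
  using dm_pos[of t] dm_half_le[of t] by (intro sin_gt_zero) auto

abbreviation "sg t \<equiv> Defs.sigma r n phi t"

lemma sg_eq: "t \<ge> t0 \<Longrightarrow> sg t = r / sin (dm t / 2)"
  using sin_dm_pos[of t] by (simp add: sigma_def)

lemma sg_pos: "t \<ge> t0 \<Longrightarrow> sg t > 0"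
  using sin_dm_pos[of t] r by (simp add: sg_eq)

lemma sg_mono: assumes "t0 \<le> s" "s \<le> t" shows "sg t \<le> sg s"
proof -
  have "sin (dm s / 2) \<le> sin (dm t / 2)"
    using dm_mono[OF assms] dm_pos[of s] dm_pos[of t] dm_half_le[of s] dm_half_le[of t] assms
    by (subst sin_mono_le_eq) auto
  moreover have "r / sin (dm t / 2) \<le> r / sin (dm s / 2)"
    by (rule divide_left_mono) (use calculation r sin_dm_pos[of s] sin_dm_pos[of t] assms in \<open>auto intro: mult_pos_pos\<close>)
  ultimately show ?thesis using sg_eq[of s] sg_eq[of t] assms by simp
qed

lemma cont_sg: "continuous_on {t0..} sg"
proof -
  have c1: "continuous_on {t0..} (\<lambda>t. \<bar>sin (dm t / 2)\<bar>)"
    by (intro continuous_intros cont_dm) auto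
  have "continuous_on {t0..} (\<lambda>t. r / \<bar>sin (dm t / 2)\<bar>)"
    by (rule continuous_on_divide[OF continuous_on_const c1]) (use sin_dm_pos in force)
  then show ?thesis unfolding sigma_def .
qed

end



lemma const_on:
  fixes f :: "real \<Rightarrow> real"
  assumes d: "\<And>x. s \<le> x \<Longrightarrow> x \<le> t \<Longrightarrow> (f has_real_derivative 0) (at x within {a..})"
    and "a \<le> s" "s \<le> t"
  shows "f t = f s"
proof -
  have "f t \<le> f s" by (rule decr_on[where f'="\<lambda>_. 0"]) (use d assms in auto)
  moreover have "(\<lambda>x. - f x) t \<le> (\<lambda>x. - f x) s"
    by (rule decr_on[where f'="\<lambda>_. 0"]) (use d assms in \<open>auto intro!: derivative_eq_intros\<close>)
  ultimately show ?thesis by simp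
qed

lemma lam_zero: "rho \<le> s + 2 * r \<Longrightarrow> eps > 0 \<Longrightarrow> lam r eps rho s = 0"
  by (auto simp: lam_def)

lemma lam_nonneg: "eps > 0 \<Longrightarrow> lam r eps rho s \<ge> 0"
  by (auto simp: lam_def)

context sys begin

lemma cont_rho: "i \<in> {1..n} \<Longrightarrow> continuous_on {t0..} (rho i)"
  by (rule cont_of_deriv_within[where f' = "\<lambda>t. lam r eps (rho i t) (sg t) * kr * (rs - rho i t)"])
     (rule ode_rho, auto)

lemma rho_const: assumes i: "i \<in> {1..n}" and a: "t0 \<le> a" "a \<le> t"
  and le: "\<And>u. a \<le> u \<Longrightarrow> u \<le> t \<Longrightarrow> rho i u \<le> sg u + 2 * r"
  shows "rho i t = rho i a"
proof (rule const_on[OF _ a])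
  fix x assume x: "a \<le> x" "x \<le> t"
  have "lam r eps (rho i x) (sg x) = 0" using le[OF x] eps by (rule lam_zero)
  then show "(rho i has_real_derivative 0) (at x within {t0..})"
    using ode_rho[OF i, of x] x a by simp
qed

lemma freeze: assumes i: "i \<in> {1..n}" and t: "t \<ge> t0"
  shows "rho i t \<ge> sg t + 2 * r \<or> (rho i t = rho i t0 \<and> rho i t < sg t + 2 * r)"
proof (rule ccontr)
  assume H: "\<not> ?thesis"
  then have gt: "rho i t - sg t - 2 * r < 0" by auto
  define g where "g u = rho i u - sg u - 2 * r" for u
  have cg: "continuous_on {t0..t} g" unfolding g_def
    by (intro continuous_intros continuous_on_subset[OF cont_rho[OF i]] continuous_on_subset[OF cont_sg]) auto
  show False
  proof (cases "\<forall>u. t0 \<le> u \<and> u \<le> t \<longrightarrow> g u < 0")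
    case True
    then have "rho i t = rho i t0" using t
      by (intro rho_const[OF i]) (auto simp: g_def less_imp_le)
    then show False using H gt by auto
  next
    case False
    obtain \<tau> where tau: "t0 \<le> \<tau>" "\<tau> < t" "g \<tau> = 0" and neg: "\<forall>u. \<tau> < u \<and> u \<le> t \<longrightarrow> g u < 0"
      using last_zero[OF cg _ t False] gt unfolding g_def by auto
    have "rho i t = rho i \<tau>"
    proof (rule rho_const[OF i tau(1)])
      show "\<tau> \<le> t" using tau by simp
      fix u assume "\<tau> \<le> u" "u \<le> t"
      then have "u = \<tau> \<or> \<tau> < u" by auto
      then show "rho i u \<le> sg u + 2 * r"
      proof
        assume "u = \<tau>" then show ?thesis using tau(3) unfolding g_def by simp
      next
        assume "\<tau> < u" then have "g u < 0" using neg \<open>u \<le> t\<close> by blast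
        then show ?thesis unfolding g_def by simp
      qed
    qed
    moreover have "sg t \<le> sg \<tau>" using sg_mono tau by simp
    ultimately show False using tau(3) gt unfolding g_def by simp
  qed
qed

lemma angle_ge_lt: assumes ij: "i \<in> {1..n}" "j \<in> {1..n}" "i < j" and t: "t \<ge> t0"
  shows "(sin ((phi j t - phi i t) / 2))\<^sup>2 \<ge> (sin (dm t / 2))\<^sup>2"
proof -
  define \<theta> where "\<theta> = phi j t - phi i t"
  have pos: "\<And>k. k \<in> {1..n} \<Longrightarrow> dl k t \<ge> dm t" "\<And>k. k \<in> {1..n} \<Longrightarrow> dl k t \<ge> 0"
    using dm_le dm_pos[OF t] by (auto intro: order.trans[OF less_imp_le])
  have th: "\<theta> = (\<Sum>k\<in>{Suc i..j}. dl k t)" unfolding \<theta>_def using ij by (intro angle_sum) auto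
  have sub: "{Suc i..j} \<subseteq> {1..n}" using ij by auto
  have "dl j t \<le> (\<Sum>k\<in>{Suc i..j}. dl k t)"
    by (rule member_le_sum) (use ij sub pos in auto)
  then have l1: "dm t \<le> \<theta>" using pos(1)[of j] ij th by simp
  have "2 * pi - \<theta> = (\<Sum>k\<in>{1..n} - {Suc i..j}. dl k t)"
    using sum_diff[OF _ sub, of "\<lambda>k. dl k t"] sum_delta[of t] th by simp
  moreover have "dl 1 t \<le> (\<Sum>k\<in>{1..n} - {Suc i..j}. dl k t)"
    by (rule member_le_sum) (use ij n2 pos in auto)
  ultimately have l2: "dm t \<le> 2 * pi - \<theta>" using pos(1)[of 1] n2 by simp
  have dmh: "0 < dm t / 2" "dm t / 2 \<le> pi / 2" using dm_pos[OF t] dm_half_le[of t] by auto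
  have s: "sin (dm t / 2) \<le> sin (\<theta> / 2)"
  proof (cases "\<theta> / 2 \<le> pi / 2")
    case True
    then show ?thesis using dmh l1 by (subst sin_mono_le_eq) auto
  next
    case False
    have "sin (\<theta> / 2) = sin (pi - \<theta> / 2)" by simp
    moreover have "sin (dm t / 2) \<le> sin (pi - \<theta> / 2)"
      using dmh l2 False by (subst sin_mono_le_eq) auto
    ultimately show ?thesis by simp
  qed
  have "0 \<le> sin (dm t / 2)" using sin_dm_pos[OF t] by simp
  then show ?thesis using s unfolding \<theta>_def by (intro power_mono) auto
qed

lemma angle_ge: assumes ij: "i \<in> {1..n}" "j \<in> {1..n}" "i \<noteq> j" and t: "t \<ge> t0"
  shows "(sin ((phi j t - phi i t) / 2))\<^sup>2 \<ge> (sin (dm t / 2))\<^sup>2"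
proof (cases "i < j")
  case True then show ?thesis using angle_ge_lt ij t by simp
next
  case False
  then have "j < i" using ij by simp
  then have "(sin ((phi i t - phi j t) / 2))\<^sup>2 \<ge> (sin (dm t / 2))\<^sup>2" using angle_ge_lt ij t by simp
  moreover have "(phi j t - phi i t) / 2 = - ((phi i t - phi j t) / 2)" by (auto simp: field_simps)
  ultimately show ?thesis by (simp only: sin_minus power2_minus)
qed

lemma dist_sq: "(rho i t)\<^sup>2 + (rho j t)\<^sup>2 - 2 * rho i t * rho j t * cos (phi j t - phi i t) + (z j t - z i t)\<^sup>2
   = (rho i t - rho j t)\<^sup>2 + 4 * (rho i t * rho j t) * (sin ((phi j t - phi i t) / 2))\<^sup>2 + (z j t - z i t)\<^sup>2"
proof -
  have c: "cos (2 * ((phi j t - phi i t) / 2)) = 1 - 2 * (sin ((phi j t - phi i t) / 2))\<^sup>2"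
    by (rule cos_double_sin)
  have "2 * ((phi j t - phi i t) / 2) = phi j t - phi i t" by simp
  then have h: "cos (phi j t - phi i t) = 1 - 2 * (sin ((phi j t - phi i t) / 2))\<^sup>2" using c by metis
  show ?thesis unfolding h by (simp add: power2_diff algebra_simps)
qed

lemma no_collision: assumes ij: "i \<in> {1..n}" "j \<in> {1..n}" "i \<noteq> j" and t: "t \<ge> t0"
  and p: "rho i t0 > 0" "rho j t0 > 0" and sep: "\<bar>rho i t0 - rho j t0\<bar> \<ge> 2 * r"
  shows "dist_ij rho phi z i j t > 2 * r"
proof -
  define a b S s where "a = rho i t" and "b = rho j t" and "S = sin (dm t / 2)"
    and "s = (sin ((phi j t - phi i t) / 2))\<^sup>2"
  have S0: "S > 0" using sin_dm_pos[OF t] S_def by simp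
  have sS: "s \<ge> S\<^sup>2" using angle_ge[OF ij t] S_def s_def by simp
  have sg: "sg t * S = r" using sg_eq[OF t] S0 S_def by simp
  have sgp: "sg t > 0" using sg_pos[OF t] .
  have fi: "a \<ge> sg t + 2 * r \<or> (a = rho i t0 \<and> a < sg t + 2 * r)" using freeze[OF ij(1) t] a_def by simp
  have fj: "b \<ge> sg t + 2 * r \<or> (b = rho j t0 \<and> b < sg t + 2 * r)" using freeze[OF ij(2) t] b_def by simp
  have ap: "a > 0" using fi p sgp r by auto
  have bp: "b > 0" using fj p sgp r by auto
  have case_split: "(a > sg t \<and> b > sg t) \<or> \<bar>a - b\<bar> \<ge> 2 * r"
    using fi fj sep r by auto
  have X: "(2 * r)\<^sup>2 < (a - b)\<^sup>2 + 4 * (a * b) * s + (z j t - z i t)\<^sup>2"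
    using case_split
  proof
    assume ab: "a > sg t \<and> b > sg t"
    have "sg t * sg t < a * b" using ab sgp by (intro mult_strict_mono) auto
    then have "(sg t * S)\<^sup>2 < (a * b) * S\<^sup>2" using S0 by (simp add: power2_eq_square mult_ac)
    also have "\<dots> \<le> (a * b) * s" using sS ap bp by (intro mult_left_mono) auto
    finally have "r\<^sup>2 < a * b * s" using sg by simp
    moreover have "0 \<le> (a - b)\<^sup>2" "0 \<le> (z j t - z i t)\<^sup>2" by simp_all
    moreover have "(2 * r)\<^sup>2 = 4 * r\<^sup>2" by (simp add: power2_eq_square)
    ultimately show ?thesis by linarith
  next
    assume ab: "\<bar>a - b\<bar> \<ge> 2 * r"
    have "(2 * r)\<^sup>2 \<le> (a - b)\<^sup>2" using ab r
      by (metis abs_of_pos power2_abs power_mono mult_pos_pos zero_less_numeral less_imp_le)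
    moreover have "0 < a * b * s" using ap bp sS S0
      by (meson mult_pos_pos order.strict_trans2 zero_less_power)
    moreover have "0 \<le> (z j t - z i t)\<^sup>2" by simp
    ultimately show ?thesis by linarith
  qed
  have "2 * r < sqrt ((a - b)\<^sup>2 + 4 * (a * b) * s + (z j t - z i t)\<^sup>2)"
    using X r by (intro real_less_rsqrt) simp
  then show ?thesis unfolding dist_ij_def dist_sq a_def b_def s_def .
qed

end



lemma lam_ge: assumes "rho - s - 2 * r \<ge> g" "g > 0" "eps > 0"
  shows "lam r eps rho s \<ge> min 1 (g / eps)"
proof -
  have "(rho - s - 2 * r) / eps \<ge> g / eps" using assms by (intro divide_right_mono) auto
  then show ?thesis using assms unfolding lam_def by auto
qed

lemma exp_decay_tendsto: "a > 0 \<Longrightarrow> ((\<lambda>t::real. C * exp (- a * (t - t0))) \<longlongrightarrow> 0) at_top"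
  by real_asymp

lemma lam_le1: "eps > 0 \<Longrightarrow> lam r eps rho s \<le> 1"
  by (auto simp: lam_def field_simps)

context sys begin

lemma exp_phi: assumes i: "i \<in> {1..n}"
  shows "exp_conv t0 (\<lambda>t. phi i t - phibar n phi i t) 0 \<and> exp_conv t0 (dphi i) ws"
proof -
  define C where "C = sqrt (V t0)"
  have bnd: "\<bar>dl (nxt n i) t - dl i t\<bar> \<le> 2 * (C * exp (- (alpha/2) * (t - t0)))" if t: "t \<ge> t0" for t
  proof -
    have "\<bar>dl (nxt n i) t - dl i t\<bar> = \<bar>ee (nxt n i) t - ee i t\<bar>" by simp
    also have "\<dots> \<le> \<bar>ee (nxt n i) t\<bar> + \<bar>ee i t\<bar>" by (rule abs_triangle_ineq4)
    also have "\<dots> \<le> 2 * (C * exp (- (alpha/2) * (t - t0)))"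
      using ee_bound[OF nxt_in[OF i] t] ee_bound[OF i t] unfolding C_def by simp
    finally show ?thesis .
  qed
  have "exp_conv t0 (\<lambda>t. phi i t - phibar n phi i t) 0"
    unfolding exp_conv_def
  proof (intro exI conjI allI impI)
    show "alpha / 2 > 0" using alpha_pos by simp
    fix t assume t: "t \<ge> t0"
    have X: "phi i t - phibar n phi i t = - ((dl (nxt n i) t - dl i t) / 2)"
      using pb[OF i, of t] by linarith
    have "\<bar>phi i t - phibar n phi i t - 0\<bar> = \<bar>dl (nxt n i) t - dl i t\<bar> / 2"
      unfolding diff_zero X abs_minus_cancel abs_divide by simp
    also have "\<dots> \<le> C * exp (- (alpha/2) * (t - t0))" using bnd[OF t] by simp
    finally show "\<bar>phi i t - phibar n phi i t - 0\<bar> \<le> C * exp (- (alpha/2) * (t - t0))" .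
  qed
  moreover have "exp_conv t0 (dphi i) ws"
    unfolding exp_conv_def
  proof (intro exI conjI allI impI)
    show "alpha / 2 > 0" using alpha_pos by simp
    fix t assume t: "t \<ge> t0"
    have "\<bar>dphi i t - ws\<bar> = kp / 2 * \<bar>dl (nxt n i) t - dl i t\<bar>"
      using dphi_eq[OF i t] kp by (simp add: abs_mult)
    also have "\<dots> \<le> kp / 2 * (2 * (C * exp (- (alpha/2) * (t - t0))))"
      using bnd[OF t] kp by (intro mult_left_mono) auto
    finally show "\<bar>dphi i t - ws\<bar> \<le> (kp * C) * exp (- (alpha/2) * (t - t0))" by simp
  qed
  ultimately show ?thesis ..
qed

lemma exp_z: assumes i: "i \<in> {1..n}" shows "exp_conv t0 (z i) 0"
  unfolding exp_conv_def
proof (intro exI conjI allI impI)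
  show "kz > 0" by (rule kz)
  fix t assume t: "t \<ge> t0"
  have "(\<lambda>t. z i t * exp (kz * (t - t0))) t = (\<lambda>t. z i t * exp (kz * (t - t0))) t0"
  proof (rule const_on[where f = "\<lambda>t. z i t * exp (kz * (t - t0))" and a = t0])
    fix x assume x: "t0 \<le> x" "x \<le> t"
    show "((\<lambda>t. z i t * exp (kz * (t - t0))) has_real_derivative 0) (at x within {t0..})"
      using ode_z[OF i, of x] x by (auto intro!: derivative_eq_intros simp: algebra_simps)
  qed (use t in auto)
  then have "z i t * exp (kz * (t - t0)) = z i t0" by simp
  then have "z i t = z i t0 * exp (- kz * (t - t0))"
    by (metis exp_minus_inverse mult.assoc mult.commute mult.right_neutral mult_minus_left)
  then show "\<bar>z i t - 0\<bar> \<le> \<bar>z i t0\<bar> * exp (- kz * (t - t0))" by (simp add: abs_mult)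
qed

lemma e2_decr: assumes i: "i \<in> {1..n}" and st: "t0 \<le> s" "s \<le> t"
  shows "(rho i t - rs)\<^sup>2 \<le> (rho i s - rs)\<^sup>2"
proof (rule decr_on[where f = "\<lambda>t. (rho i t - rs)\<^sup>2" and a = t0 and
      f' = "\<lambda>x. 2 * (rho i x - rs) * (lam r eps (rho i x) (sg x) * kr * (rs - rho i x))"])
  fix x assume x: "s \<le> x" "x \<le> t"
  show "((\<lambda>t. (rho i t - rs)\<^sup>2) has_real_derivative 2 * (rho i x - rs) * (lam r eps (rho i x) (sg x) * kr * (rs - rho i x))) (at x within {t0..})"
    using ode_rho[OF i, of x] x st by (auto intro!: derivative_eq_intros)
  have "2 * (rho i x - rs) * (lam r eps (rho i x) (sg x) * kr * (rs - rho i x)) = - (2 * lam r eps (rho i x) (sg x) * kr * (rho i x - rs)\<^sup>2)"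
    by (simp add: power2_eq_square algebra_simps)
  moreover have "0 \<le> 2 * lam r eps (rho i x) (sg x) * kr * (rho i x - rs)\<^sup>2"
    using lam_nonneg[OF eps] kr by simp
  ultimately show "2 * (rho i x - rs) * (lam r eps (rho i x) (sg x) * kr * (rs - rho i x)) \<le> 0" by linarith
qed (use st in auto)

lemma rho_lb: assumes i: "i \<in> {1..n}" and t: "t \<ge> t0"
  shows "rho i t \<ge> min rs (rho i t0)"
proof (cases "rho i t0 - rs > 0")
  case False
  have "(rho i t - rs)\<^sup>2 \<le> (rho i t0 - rs)\<^sup>2" using e2_decr[OF i _ t] by simp
  then have "\<bar>rho i t - rs\<bar> \<le> \<bar>rho i t0 - rs\<bar>" using abs_le_square_iff by blast
  then show ?thesis using False by auto
next
  case True
  have "rho i t \<ge> rs"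
  proof (rule ccontr)
    assume "\<not> rho i t \<ge> rs"
    then have neg: "rho i t - rs < 0" by simp
    have c: "continuous_on {t0..t} (\<lambda>u. rho i u - rs)"
      by (intro continuous_intros continuous_on_subset[OF cont_rho[OF i]]) auto
    have "\<not> (\<forall>u. t0 \<le> u \<and> u \<le> t \<longrightarrow> rho i u - rs < 0)" using True t by auto
    then obtain \<tau> where tau: "t0 \<le> \<tau>" "\<tau> < t" "rho i \<tau> - rs = 0"
      using last_zero[OF c neg t] by blast
    have "(rho i t - rs)\<^sup>2 \<le> (rho i \<tau> - rs)\<^sup>2" using e2_decr[OF i tau(1)] tau by simp
    then show False using tau neg by simp
  qed
  then show ?thesis by simp
qed

definition "thr = r / \<bar>sin (pi / real n)\<bar> + 2 * r"

lemma sin_pin: "sin (pi / real n) > 0" "\<bar>sin (pi / real n)\<bar> = sin (pi / real n)"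
proof -
  have "pi / real n \<le> pi / 2" using n2 by (simp add: field_simps)
  moreover have "pi / real n > 0" using n2 by simp
  ultimately show "sin (pi / real n) > 0" using pi_gt_zero by (intro sin_gt_zero) linarith+
  then show "\<bar>sin (pi / real n)\<bar> = sin (pi / real n)" by simp
qed

lemma sg_eventually: assumes g: "g > 0"
  shows "\<exists>T\<ge>t0. \<forall>t\<ge>T. sg t \<le> r / sin (pi / real n) + g"
proof -
  define B where "B t = sqrt (V t0) * exp (- (alpha/2) * (t - t0))" for t
  have B0: "(B \<longlongrightarrow> 0) at_top" unfolding B_def using alpha_pos by (intro exp_decay_tendsto) simp
  have low: "eventually (\<lambda>t. 2 * pi / real n - B t \<le> dm t) at_top"
    unfolding eventually_at_top_linorder
  proof (intro exI allI impI)
    fix t assume t: "t \<ge> t0"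
    obtain k where k: "k \<in> {1..n}" "dm t = dl k t" using dm_in by blast
    show "2 * pi / real n - B t \<le> dm t" using ee_bound[OF k(1) t] k unfolding B_def by simp
  qed
  have up: "eventually (\<lambda>t. dm t \<le> 2 * pi / real n) at_top" using dm_upper by simp
  have "((\<lambda>t. 2 * pi / real n - B t) \<longlongrightarrow> 2 * pi / real n - 0) at_top"
    by (intro tendsto_intros B0)
  then have dmt: "(dm \<longlongrightarrow> 2 * pi / real n) at_top"
    by (intro tendsto_sandwich[OF low up]) auto
  have s0: "sin (2 * pi / real n / 2) \<noteq> 0" using sin_pin by simp
  have "((\<lambda>t. r / sin (dm t / 2)) \<longlongrightarrow> r / sin (2 * pi / real n / 2)) at_top"
    by (intro tendsto_intros dmt s0) auto
  then have "eventually (\<lambda>t. r / sin (dm t / 2) < r / sin (2 * pi / real n / 2) + g) at_top"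
    using g by (intro order_tendstoD(2)) auto
  then obtain N where N: "\<forall>t\<ge>N. r / sin (dm t / 2) < r / sin (2 * pi / real n / 2) + g"
    unfolding eventually_at_top_linorder by blast
  show ?thesis
  proof (intro exI conjI allI impI)
    show "max N t0 \<ge> t0" by simp
    fix t assume "max N t0 \<le> t"
    then have "r / sin (dm t / 2) < r / sin (2 * pi / real n / 2) + g" "sg t = r / sin (dm t / 2)"
      using N sg_eq[of t] by auto
    then show "sg t \<le> r / sin (pi / real n) + g" by simp
  qed
qed

lemma rho_conv: assumes i: "i \<in> {1..n}" and rsb: "rs > thr" and r0: "rho i t0 > thr"
  shows "exp_conv t0 (rho i) rs"
proof -
  define m0 where "m0 = min rs (rho i t0)"
  define g0 where "g0 = (m0 - thr) / 2"
  have g0: "g0 > 0" using rsb r0 unfolding g0_def m0_def by simp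
  obtain T where T: "T \<ge> t0" "\<And>t. t \<ge> T \<Longrightarrow> sg t \<le> r / sin (pi / real n) + g0"
    using sg_eventually[OF g0] by blast
  define c where "c = min 1 (g0 / eps)"
  have c: "c > 0" using g0 eps unfolding c_def by simp
  have lamc: "lam r eps (rho i t) (sg t) \<ge> c" if t: "t \<ge> T" for t
  proof -
    define S where "S = r / sin (pi / real n)"
    have a4: "rho i t \<ge> m0" using rho_lb[OF i] t T unfolding m0_def by simp
    have a2: "thr = S + 2 * r" using sin_pin unfolding thr_def S_def by simp
    have a1: "sg t \<le> S + g0" using T(2)[OF t] unfolding S_def .
    have a3: "2 * g0 = m0 - thr" unfolding g0_def by simp
    have "rho i t - sg t - 2 * r \<ge> g0" using a1 a2 a3 a4 by linarith
    then show ?thesis unfolding c_def using g0 eps by (rule lam_ge)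
  qed
  define e0 where "e0 = \<bar>rho i t0 - rs\<bar>"
  define K where "K = kr * c"
  have K: "K > 0" using kr c by (simp add: K_def)
  have late: "\<bar>rho i t - rs\<bar> \<le> e0 * exp (- K * (t - T))" if t: "t \<ge> T" for t
  proof -
    define F where "F t = (rho i t - rs)\<^sup>2 * exp (2 * K * (t - T))" for t
    have "F t \<le> F T"
    proof (rule decr_on[where f = F and a = t0 and
        f' = "\<lambda>x. 2 * kr * (rho i x - rs)\<^sup>2 * exp (2 * K * (x - T)) * (c - lam r eps (rho i x) (sg x))"])
      fix x assume x: "T \<le> x" "x \<le> t"
      show "(F has_real_derivative 2 * kr * (rho i x - rs)\<^sup>2 * exp (2 * K * (x - T)) * (c - lam r eps (rho i x) (sg x))) (at x within {t0..})"
        unfolding F_def using ode_rho[OF i, of x] x T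
        by (auto intro!: derivative_eq_intros simp: K_def power2_eq_square algebra_simps)
      show "2 * kr * (rho i x - rs)\<^sup>2 * exp (2 * K * (x - T)) * (c - lam r eps (rho i x) (sg x)) \<le> 0"
        using lamc[of x] x kr by (intro mult_nonneg_nonpos) auto
    qed (use T t in auto)
    also have "F T \<le> e0\<^sup>2" unfolding F_def e0_def using e2_decr[OF i _ T(1)] by simp
    finally have "(rho i t - rs)\<^sup>2 * exp (2 * K * (t - T)) \<le> e0\<^sup>2" unfolding F_def .
    then have "(rho i t - rs)\<^sup>2 * exp (2 * K * (t - T)) * exp (- (2 * K * (t - T))) \<le> e0\<^sup>2 * exp (- (2 * K * (t - T)))"
      by (simp add: mult_right_mono)
    then have "(rho i t - rs)\<^sup>2 \<le> e0\<^sup>2 * exp (- (2 * K * (t - T)))"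
      by (simp add: mult.assoc flip: exp_add)
    also have "\<dots> = (e0 * exp (- K * (t - T)))\<^sup>2"
      by (simp add: power_mult_distrib power2_eq_square flip: exp_add)
    finally have "\<bar>rho i t - rs\<bar>\<^sup>2 \<le> (e0 * exp (- K * (t - T)))\<^sup>2" by simp
    then show ?thesis by (rule power2_le_imp_le) (simp add: e0_def)
  qed
  show ?thesis unfolding exp_conv_def
  proof (intro exI conjI allI impI)
    show "K > 0" by (rule K)
    fix t assume t: "t \<ge> t0"
    have eq: "e0 * exp (K * (T - t0)) * exp (- K * (t - t0)) = e0 * exp (- K * (t - T))"
      by (simp add: mult.assoc algebra_simps flip: exp_add)
    show "\<bar>rho i t - rs\<bar> \<le> e0 * exp (K * (T - t0)) * exp (- K * (t - t0))"
    proof (cases "t \<ge> T")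
      case True then show ?thesis unfolding eq by (rule late)
    next
      case False
      have "(rho i t - rs)\<^sup>2 \<le> (rho i t0 - rs)\<^sup>2" using e2_decr[OF i _ t] by simp
      then have a: "\<bar>rho i t - rs\<bar> \<le> e0" unfolding e0_def using abs_le_square_iff by blast
      have "K * (t - T) \<le> 0" using False K by (simp add: mult_nonneg_nonpos)
      then have "1 \<le> exp (- K * (t - T))" by simp
      then have "e0 \<le> e0 * exp (- K * (t - T))" using e0_def by (simp add: mult_le_cancel_left1)
      then show ?thesis unfolding eq using a by linarith
    qed
  qed
qed

end

theorem mainTheorem10:
  fixes n :: nat and r eps rs ws kr kz kp t0 :: real
    and rho phi z dphi :: "nat \<Rightarrow> real \<Rightarrow> real"
  assumes n2: "n \<ge> 2" and r: "r > 0" and eps: "eps > 0" and rs: "rs > 0"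
    and kr: "kr > 0" and kz: "kz > 0" and kp: "kp > 0"
    and ode_rho: "\<forall>i\<in>{1..n}. \<forall>t\<ge>t0. ((rho i) has_real_derivative
          (lam r eps (rho i t) (sigma r n phi t) * kr * (rs - rho i t))) (at t within {t0..})"
    and ode_phi: "\<forall>i\<in>{1..n}. \<forall>t\<ge>t0. ((phi i) has_real_derivative dphi i t) (at t within {t0..})
          \<and> dphi i t = ws + kp * (phibar n phi i t - phi i t)"
    and ode_z: "\<forall>i\<in>{1..n}. \<forall>t\<ge>t0. ((z i) has_real_derivative (- kz * z i t)) (at t within {t0..})"
    and delta0: "\<forall>k\<in>{1..n}. delta n phi k t0 > 0"
  shows "(((\<forall>i\<in>{1..n}. rho i t0 > r / \<bar>sin (pi / real n)\<bar> + 2*r)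
            \<and> (\<forall>i\<in>{1..n}. \<forall>j\<in>{1..n}. i \<noteq> j \<longrightarrow> \<bar>rho i t0 - rho j t0\<bar> \<ge> 2*r))
         \<longrightarrow> (\<forall>i\<in>{1..n}. \<forall>j\<in>{1..n}. \<forall>t\<ge>t0. i \<noteq> j \<longrightarrow> dist_ij rho phi z i j t > 2*r))
    \<and> (\<forall>i\<in>{1..n}. exp_conv t0 (\<lambda>t. phi i t - phibar n phi i t) 0
           \<and> exp_conv t0 (dphi i) ws \<and> exp_conv t0 (z i) 0)
    \<and> (\<forall>i\<in>{1..n}. (rs > r / \<bar>sin (pi / real n)\<bar> + 2*r
            \<and> rho i t0 > r / \<bar>sin (pi / real n)\<bar> + 2*r
            \<and> (\<forall>j\<in>{1..n}. j \<noteq> i \<longrightarrow> \<bar>rho i t0 - rho j t0\<bar> \<ge> 2*r))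
         \<longrightarrow> exp_conv t0 (rho i) rs)"
proof -
  interpret S: sys n r eps rs ws kr kz kp t0 rho phi z dphi
  proof
    show "n \<ge> 2" "r > 0" "eps > 0" "rs > 0" "kr > 0" "kz > 0" "kp > 0"
      by (fact n2 r eps rs kr kz kp)+
  next
    fix i t assume "i \<in> {1..n}" "t \<ge> t0"
    then show "((rho i) has_real_derivative
          (lam r eps (rho i t) (sigma r n phi t) * kr * (rs - rho i t))) (at t within {t0..})"
      using ode_rho by blast
  next
    fix i t assume a: "i \<in> {1..n}" "t \<ge> t0"
    have "((phi i) has_real_derivative dphi i t) (at t within {t0..}) \<and> dphi i t = ws + kp * (phibar n phi i t - phi i t)"
      using ode_phi a by blast
    then show "((phi i) has_real_derivative dphi i t) (at t within {t0..})"
      and "dphi i t = ws + kp * (phibar n phi i t - phi i t)" by (rule conjunct1, rule conjunct2)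
  next
    fix i t assume "i \<in> {1..n}" "t \<ge> t0"
    then show "((z i) has_real_derivative (- kz * z i t)) (at t within {t0..})"
      using ode_z by blast
  next
    fix k assume "k \<in> {1..n}" then show "delta n phi k t0 > 0" using delta0 by blast
  qed
  have thr0: "r / \<bar>sin (pi / real n)\<bar> + 2*r > 0" using r by (simp add: add_nonneg_pos)
  have P1: "((\<forall>i\<in>{1..n}. rho i t0 > r / \<bar>sin (pi / real n)\<bar> + 2*r)
            \<and> (\<forall>i\<in>{1..n}. \<forall>j\<in>{1..n}. i \<noteq> j \<longrightarrow> \<bar>rho i t0 - rho j t0\<bar> \<ge> 2*r))
         \<longrightarrow> (\<forall>i\<in>{1..n}. \<forall>j\<in>{1..n}. \<forall>t\<ge>t0. i \<noteq> j \<longrightarrow> dist_ij rho phi z i j t > 2*r)"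
  proof (intro impI ballI allI)
    fix i j t
    assume H: "(\<forall>i\<in>{1..n}. rho i t0 > r / \<bar>sin (pi / real n)\<bar> + 2*r)
            \<and> (\<forall>i\<in>{1..n}. \<forall>j\<in>{1..n}. i \<noteq> j \<longrightarrow> \<bar>rho i t0 - rho j t0\<bar> \<ge> 2*r)"
      and i: "i \<in> {1..n}" and j: "j \<in> {1..n}" and t: "t \<ge> t0" and ij: "i \<noteq> j"
    show "dist_ij rho phi z i j t > 2*r"
    proof (rule S.no_collision[OF i j ij t])
      have "rho i t0 > r / \<bar>sin (pi / real n)\<bar> + 2*r" using H i by blast
      then show "rho i t0 > 0" using thr0 by linarith
      have "rho j t0 > r / \<bar>sin (pi / real n)\<bar> + 2*r" using H j by blast
      then show "rho j t0 > 0" using thr0 by linarith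
      show "\<bar>rho i t0 - rho j t0\<bar> \<ge> 2 * r" using H i j ij by blast
    qed
  qed
  have P2: "\<forall>i\<in>{1..n}. exp_conv t0 (\<lambda>t. phi i t - phibar n phi i t) 0
           \<and> exp_conv t0 (dphi i) ws \<and> exp_conv t0 (z i) 0"
    using S.exp_phi S.exp_z by blast
  have P3: "\<forall>i\<in>{1..n}. (rs > r / \<bar>sin (pi / real n)\<bar> + 2*r
            \<and> rho i t0 > r / \<bar>sin (pi / real n)\<bar> + 2*r
            \<and> (\<forall>j\<in>{1..n}. j \<noteq> i \<longrightarrow> \<bar>rho i t0 - rho j t0\<bar> \<ge> 2*r))
         \<longrightarrow> exp_conv t0 (rho i) rs"
  proof (intro ballI impI)
    fix i assume i: "i \<in> {1..n}" and H: "rs > r / \<bar>sin (pi / real n)\<bar> + 2*r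
            \<and> rho i t0 > r / \<bar>sin (pi / real n)\<bar> + 2*r
            \<and> (\<forall>j\<in>{1..n}. j \<noteq> i \<longrightarrow> \<bar>rho i t0 - rho j t0\<bar> \<ge> 2*r)"
    show "exp_conv t0 (rho i) rs"
      by (rule S.rho_conv[OF i]) (use H in \<open>auto simp: S.thr_def\<close>)
  qed
  show ?thesis using P1 P2 P3 by blast
qed

end
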